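(* Let $g:\{0,1,2,3\}^*\to\{0,1,2,3\}^*$ be the morphism $g(0)=01$, $g(1)=20$, $g(2)=23$, $g(3)=02$, and $\tau$ the coding $\tau(0)=2$, $\tau(1)=1$, $\tau(2)=0$, $\tau(3)=1$; let $\mathbf{vtm}=\tau(g^\omega(0))$. Let $\eta:\{0,1,2\}^*\to\{0,1\}^*$ be the morphism $\eta(0)=00011101$, $\eta(1)=001110001101$, $\eta(2)=0011000111001101$. Then the infinite word $\eta(\mathbf{vtm})$ contains only three distinct squares: $0^2$, $1^2$, and $(10)^2$. It is $2$-automatic and can be generated by a $2$-automaton with $27$ states (so its weight is $2\cdot 27=54$).
   Context: A square is a nonempty word $xx$; "containing" means as a factor. $g^\omega(0)$ denotes the infinite fixed point of $g$ starting with $0$. A $2$-automaton (DFAO) with $s$ states generates $(a_n)_{n\ge0}$ if on input the base-$2$ representation of $n$ (most significant digit first) it outputs $a_n$; a word is $2$-automatic if some such automaton generates it; equivalently it is the image under a coding of a fixed point of a $2$-uniform morphism on $s$ letters. The weight of such a word is $2\cdot s$. *)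

theory Defs
  imports Main
begin

definition morph_apply :: "(nat \<Rightarrow> nat list) \<Rightarrow> nat list \<Rightarrow> nat list" where
  "morph_apply h xs = concat (map h xs)"

text \<open>Fixed point h^omega(a) of a morphism h prolongable on a with all images of
  length at least 2 (here: 2-uniform): position n is read from the finite prefix
  h^(n+1)(a), which has length at least n+1.\<close>
definition morph_fix :: "(nat \<Rightarrow> nat list) \<Rightarrow> nat \<Rightarrow> nat \<Rightarrow> nat" where
  "morph_fix h a n = ((morph_apply h ^^ Suc n) [a]) ! n"

text \<open>Image of an infinite word under a nonerasing morphism: position n lies
  within the image of the first n+1 letters.\<close>
definition morph_inf :: "(nat \<Rightarrow> nat list) \<Rightarrow> (nat \<Rightarrow> nat) \<Rightarrow> nat \<Rightarrow> nat" where
  "morph_inf h w n = morph_apply h (map w [0..<Suc n]) ! n"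

definition g :: "nat \<Rightarrow> nat list" where
  "g x = (if x = 0 then [0,1] else if x = 1 then [2,0] else if x = 2 then [2,3] else [0,2])"

definition tau :: "nat \<Rightarrow> nat" where
  "tau x = (if x = 0 then 2 else if x = 1 then 1 else if x = 2 then 0 else 1)"

definition vtm :: "nat \<Rightarrow> nat" where
  "vtm n = tau (morph_fix g 0 n)"

definition eta :: "nat \<Rightarrow> nat list" where
  "eta x = (if x = 0 then [0,0,0,1,1,1,0,1]
            else if x = 1 then [0,0,1,1,1,0,0,0,1,1,0,1]
            else [0,0,1,1,0,0,0,1,1,1,0,0,1,1,0,1])"

definition is_factor :: "nat list \<Rightarrow> (nat \<Rightarrow> nat) \<Rightarrow> bool" where
  "is_factor u w \<longleftrightarrow> (\<exists>i. u = map w [i..<i + length u])"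

definition is_square :: "nat list \<Rightarrow> bool" where
  "is_square u \<longleftrightarrow> (\<exists>x. x \<noteq> [] \<and> u = x @ x)"

text \<open>Base-2 representation, most significant digit first, no leading zeros
  (the representation of 0 is the empty word).\<close>
fun bin_digits :: "nat \<Rightarrow> nat list" where
  "bin_digits n = (if n = 0 then [] else bin_digits (n div 2) @ [n mod 2])"

definition dfao_generates ::
  "nat \<Rightarrow> (nat \<Rightarrow> nat \<Rightarrow> nat) \<Rightarrow> nat \<Rightarrow> (nat \<Rightarrow> nat) \<Rightarrow> (nat \<Rightarrow> nat) \<Rightarrow> bool" where
  "dfao_generates s delta q0 out w \<longleftrightarrow>
     q0 < s \<and> (\<forall>q<s. \<forall>d<2. delta q d < s) \<and>
     (\<forall>n. out (foldl delta q0 (bin_digits n)) = w n)"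

definition two_automatic_with :: "nat \<Rightarrow> (nat \<Rightarrow> nat) \<Rightarrow> bool" where
  "two_automatic_with s w \<longleftrightarrow> (\<exists>delta q0 out. dfao_generates s delta q0 out w)"

end

theory Submission
  imports Defs
begin

declare bin_digits.simps[simp del]

definition XX :: "nat \<Rightarrow> nat list" where "XX m = (morph_apply g ^^ m) [0]"
definition WW :: "nat \<Rightarrow> nat" where "WW n = morph_fix g 0 n"

lemma g_len[simp]: "length (g x) = 2" by (simp add: g_def)

lemma concat_len2: "length (concat (map g xs)) = 2 * length xs"
  by (induction xs) auto

lemma concat_nth2: "n < length xs \<Longrightarrow> c < 2 \<Longrightarrow> concat (map g xs) ! (2*n+c) = g (xs!n) ! c"
proof (induction xs arbitrary: n)
  case Nil then show ?case by simp
next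
  case (Cons x xs)
  show ?case
  proof (cases n)
    case 0 then show ?thesis using Cons by (simp add: nth_append)
  next
    case (Suc m)
    then have "concat (map g (x#xs)) ! (2*n+c) = concat (map g xs) ! (2*m+c)"
      using Cons.prems by (simp add: nth_append)
    then show ?thesis using Cons Suc by simp
  qed
qed

lemma morph_apply_append: "morph_apply h (xs @ ys) = morph_apply h xs @ morph_apply h ys"
  by (simp add: morph_apply_def)

lemma XX_Suc: "XX (Suc m) = morph_apply g (XX m)"
  by (simp add: XX_def)

lemma XX_len: "length (XX m) = 2 ^ m"
  by (induction m) (auto simp: XX_Suc morph_apply_def concat_len2, simp add: XX_def)

lemma XX_prefix: "\<exists>ys. XX (Suc m) = XX m @ ys"
proof (induction m)
  case 0 then show ?case by (simp add: XX_def morph_apply_def g_def)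
next
  case (Suc m)
  then obtain ys where "XX (Suc m) = XX m @ ys" by blast
  then have "XX (Suc (Suc m)) = XX (Suc m) @ morph_apply g ys"
    by (simp add: XX_Suc morph_apply_append)
  then show ?case by blast
qed

lemma XX_nth_mono0: "m \<le> m' \<Longrightarrow> n < 2 ^ m \<Longrightarrow> XX m' ! n = XX m ! n"
proof (induction m' rule: dec_induct)
  case base then show ?case by simp
next
  case (step k)
  obtain ys where "XX (Suc k) = XX k @ ys" using XX_prefix by blast
  moreover have "n < length (XX k)" using step XX_len
    by (metis order_less_le_trans one_le_numeral power_increasing)
  ultimately show ?case using step by (simp add: nth_append)
qed

lemma XX_nth_mono: "n < 2 ^ m \<Longrightarrow> m \<le> m' \<Longrightarrow> XX m' ! n = XX m ! n"
  using XX_nth_mono0 by blast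

lemma n_lt_2pow: "(n::nat) < 2 ^ n" by simp

lemma WW_XX: "n < 2 ^ M \<Longrightarrow> WW n = XX M ! n"
proof -
  assume a: "n < 2 ^ M"
  have b: "n < 2 ^ Suc n" using n_lt_2pow[of n] by (simp only: power_Suc)
  have "WW n = XX (Suc n) ! n" by (simp add: WW_def morph_fix_def XX_def)
  also have "\<dots> = XX (max M (Suc n)) ! n" using XX_nth_mono[OF b, of "max M (Suc n)"] by linarith
  also have "\<dots> = XX M ! n" using XX_nth_mono[OF a, of "max M (Suc n)"] by linarith
  finally show ?thesis .
qed

lemma WW_0[simp]: "WW 0 = 0"
proof -
  have "WW 0 = XX 0 ! 0" by (rule WW_XX) simp
  then show ?thesis by (simp add: XX_def)
qed

lemma WW_rec: "c < 2 \<Longrightarrow> WW (2*n+c) = g (WW n) ! c"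
proof -
  assume c: "c < 2"
  have n: "n < 2 ^ Suc n" using n_lt_2pow[of n] by (simp only: power_Suc)
  have "2*n+c < 2 ^ Suc (Suc n)" using n c by (simp only: power_Suc)
  then have "WW (2*n+c) = XX (Suc (Suc n)) ! (2*n+c)" by (rule WW_XX)
  also have "\<dots> = g (XX (Suc n) ! n) ! c"
    using concat_nth2[of n "XX (Suc n)" c] n c XX_len by (simp add: XX_Suc[of "Suc n"] morph_apply_def)
  also have "\<dots> = g (WW n) ! c" using WW_XX[OF n] by simp
  finally show ?thesis .
qed

lemma WW_rec0: "WW (2*n) = g (WW n) ! 0" using WW_rec[of 0 n] by simp
lemma WW_rec1: "WW (Suc (2*n)) = g (WW n) ! 1" using WW_rec[of 1 n] by simp

lemma g_lt4: "c < 2 \<Longrightarrow> g x ! c < 4"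
  by (auto simp: g_def nth_Cons less_2_cases_iff)

lemma WW_lt4: "WW n < 4"
proof (cases "n = 0")
  case True then show ?thesis by simp
next
  case False
  have "n = 2*(n div 2) + n mod 2" by simp
  then have "WW n = g (WW (n div 2)) ! (n mod 2)" using WW_rec[of "n mod 2" "n div 2"] by simp
  then show ?thesis using g_lt4[of "n mod 2"] by simp
qed


definition F2set :: "(nat \<times> nat) set" where
  "F2set = {(0,1),(0,2),(1,2),(2,0),(2,3),(3,0)}"

lemma lt4_cases: "(x::nat) < 4 \<Longrightarrow> x = 0 \<or> x = 1 \<or> x = 2 \<or> x = 3" by auto

lemma WW_pair: "(WW k, WW (Suc k)) \<in> F2set"
proof (induction k rule: less_induct)
  case (less k)
  show ?case
  proof (cases "even k")
    case True
    then obtain m where k: "k = 2*m" by blast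
    have "WW k = g (WW m) ! 0" "WW (Suc k) = g (WW m) ! 1" using k WW_rec0 WW_rec1 by auto
    then show ?thesis using lt4_cases[OF WW_lt4[of m]] by (auto simp: g_def F2set_def)
  next
    case False
    then obtain m where k: "k = Suc (2*m)" by (metis oddE Suc_eq_plus1)
    then have "m < k" by simp
    then have ih: "(WW m, WW (Suc m)) \<in> F2set" using less by blast
    have "WW k = g (WW m) ! 1" "WW (Suc k) = g (WW (Suc m)) ! 0"
      using k WW_rec1 WW_rec0[of "Suc m"] by auto
    then show ?thesis using ih by (auto simp: g_def F2set_def)
  qed
qed

definition TT :: "nat \<Rightarrow> bool" where "TT k = (WW k = 1 \<or> WW k = 2)"
definition LL :: "nat \<Rightarrow> nat" where "LL a = length (eta (tau a))"
definition PP :: "nat \<Rightarrow> nat" where "PP k = 12*k + (if TT k then 4 else 0)"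
definition blk :: "nat \<Rightarrow> nat list" where "blk k = eta (vtm k)"

lemma vtm_WW: "vtm k = tau (WW k)" by (simp add: vtm_def WW_def)

lemma LL_simps[simp]: "LL 0 = 16" "LL 1 = 12" "LL (Suc 0) = 12" "LL 2 = 8" "LL 3 = 12"
  by (simp_all add: LL_def eta_def tau_def)

lemma LL_ge8: "x < 4 \<Longrightarrow> LL x \<ge> 8"
  using lt4_cases[of x] by auto

lemma LL_WW_ge8: "LL (WW k) \<ge> 8" using LL_ge8[OF WW_lt4] .

lemma blk_len: "length (blk k) = LL (WW k)"
  by (simp add: blk_def LL_def vtm_WW)

lemma PP_0[simp]: "PP 0 = 0" by (simp add: PP_def TT_def)

lemma PP_Suc: "PP (Suc k) = PP k + LL (WW k)"
  using WW_pair[of k] by (auto simp: PP_def TT_def F2set_def)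

lemma PP_less_Suc: "PP k < PP (Suc k)" using PP_Suc LL_WW_ge8[of k] by simp

lemma PP_strict: "strict_mono PP"
  unfolding strict_mono_Suc_iff using PP_less_Suc by blast

lemma PP_less_iff: "PP k < PP k' \<longleftrightarrow> k < k'"
  using PP_strict by (simp add: strict_mono_less)

lemma PP_le_iff: "PP k \<le> PP k' \<longleftrightarrow> k \<le> k'"
  using PP_strict by (simp add: strict_mono_less_eq)

lemma PP_inj: "PP k = PP k' \<longleftrightarrow> k = k'"
  using PP_strict strict_mono_eq by blast

lemma PP_ge: "PP k \<ge> 12 * k" by (simp add: PP_def)

definition CC :: "nat \<Rightarrow> nat list" where "CC m = concat (map blk [0..<m])"

lemma CC_len: "length (CC m) = PP m"
  by (induction m) (simp_all add: CC_def PP_Suc blk_len)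

lemma CC_nth: "k < m \<Longrightarrow> e < LL (WW k) \<Longrightarrow> CC m ! (PP k + e) = blk k ! e"
proof -
  assume km: "k < m" and e: "e < LL (WW k)"
  have "[0..<m] = [0..<k] @ k # [Suc k..<m]"
  proof -
    have "[0..<k + (m - k)] = [0..<k] @ [k..<k + (m-k)]" by (rule upt_add_eq_append) simp
    moreover have "k + (m - k) = m" using km by simp
    ultimately show ?thesis using upt_conv_Cons[OF km] by simp
  qed
  then have "CC m = CC k @ blk k @ concat (map blk [Suc k..<m])" by (simp add: CC_def)
  then show ?thesis using e by (simp add: nth_append CC_len blk_len)
qed

abbreviation ww :: "nat \<Rightarrow> nat" where "ww \<equiv> morph_inf eta vtm"

lemma blk_fun: "blk = (\<lambda>x. eta (vtm x))" by (rule ext) (simp add: blk_def)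

lemma ww_CC: "ww n = CC (Suc n) ! n"
  by (simp add: morph_inf_def morph_apply_def CC_def blk_fun map_map comp_def del: upt_Suc)

lemma ww_blk: "e < LL (WW k) \<Longrightarrow> ww (PP k + e) = blk k ! e"
proof -
  assume e: "e < LL (WW k)"
  have "k < Suc (PP k + e)" using PP_ge[of k] by linarith
  then show ?thesis using CC_nth[OF _ e] ww_CC by simp
qed

lemma decomp: "\<exists>k j. n = PP k + j \<and> j < LL (WW k)"
proof (induction n)
  case 0 then show ?case using LL_WW_ge8[of 0] by (intro exI[of _ 0]) auto
next
  case (Suc n)
  then obtain k j where kj: "n = PP k + j" "j < LL (WW k)" by blast
  show ?case
  proof (cases "Suc j < LL (WW k)")
    case True then show ?thesis using kj by (intro exI[of _ k] exI[of _ "Suc j"]) auto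
  next
    case False
    then have "Suc n = PP (Suc k)" using kj PP_Suc by simp
    then show ?thesis using LL_WW_ge8[of "Suc k"] by (intro exI[of _ "Suc k"] exI[of _ 0]) auto
  qed
qed

lemma PP_diff_len: "length (concat (map blk [k..<k+r])) = PP (k+r) - PP k"
proof (induction r)
  case 0 then show ?case by simp
next
  case (Suc r)
  have "PP k \<le> PP (k+r)" using PP_le_iff by simp
  then show ?case using Suc by (simp add: blk_len PP_Suc)
qed

lemma ww_window: "e < PP (k+r) - PP k \<Longrightarrow> ww (PP k + e) = concat (map blk [k..<k+r]) ! e"
proof (induction r arbitrary: e)
  case 0 then show ?case by simp
next
  case (Suc r)
  have le: "PP k \<le> PP (k+r)" using PP_le_iff by simp
  show ?case
  proof (cases "e < PP (k+r) - PP k")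
    case True
    then show ?thesis using Suc PP_diff_len[of k r] by (simp add: nth_append)
  next
    case False
    define e' where "e' = e - (PP (k+r) - PP k)"
    have e': "e' < LL (WW (k+r))" using Suc.prems False le by (simp add: e'_def PP_Suc)
    have "PP k + e = PP (k+r) + e'" using False le by (simp add: e'_def)
    then have "ww (PP k + e) = blk (k+r) ! e'" using ww_blk[OF e'] by simp
    then show ?thesis using False PP_diff_len[of k r] by (simp add: nth_append e'_def)
  qed
qed

definition bd :: "nat \<Rightarrow> bool" where "bd n \<longleftrightarrow> (\<exists>k. n = PP k)"

lemma not_bd_between: "PP k < n \<Longrightarrow> n < PP (Suc k) \<Longrightarrow> \<not> bd n"
  unfolding bd_def using PP_less_iff by (metis less_Suc_eq_le not_le)



definition tt :: "nat \<Rightarrow> nat" where "tt a = (if a = 1 \<or> a = 2 then 4 else 0)"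

definition stp :: "nat \<times> nat \<times> nat \<Rightarrow> nat \<Rightarrow> nat \<times> nat \<times> nat" where
  "stp s c = (case s of (a, b, j) \<Rightarrow>
     (let off = tt a + 2*j + c; a0 = g a ! 0; a1 = g a ! 1; b0 = g b ! 0; b1 = g b ! 1 in
      if off < LL a0 then (a0, a1, off)
      else if off < LL a0 + LL a1 then (a1, b0, off - LL a0)
      else (b0, b1, off - LL a0 - LL a1)))"

definition RR :: "(nat \<times> nat \<times> nat) list" where
  "RR = [(0,1,0),(0,1,1),(0,1,2),(0,1,3),(0,1,4),(0,1,5),(0,1,6),(0,1,7),(0,1,8),(0,1,9),(0,1,10),(0,1,11),(0,1,12),(0,1,13),(0,1,14),(0,1,15),(1,2,0),(1,2,1),(1,2,2),(1,2,3),(1,2,4),(1,2,5),(1,2,6),(1,2,7),(1,2,8),(1,2,9),(1,2,10),(1,2,11),(2,0,0),(2,0,1),(2,0,2),(2,0,3),(2,0,4),(2,0,5),(2,0,6),(2,0,7),(0,2,0),(0,2,1),(0,2,2),(0,2,3),(0,2,4),(0,2,5),(0,2,6),(0,2,7),(0,2,8),(0,2,9),(0,2,10),(0,2,11),(0,2,12),(0,2,13),(0,2,14),(0,2,15),(2,3,0),(2,3,1),(2,3,2),(2,3,3),(2,3,4),(2,3,5),(2,3,6),(2,3,7),(3,0,0),(3,0,1),(3,0,2),(3,0,3),(3,0,4),(3,0,5),(3,0,6),(3,0,7),(3,0,8),(3,0,9),(3,0,10),(3,0,11)]"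

definition PItab :: "((nat \<times> nat \<times> nat) \<times> nat) list" where
  "PItab = [((0,1,0),0),((0,1,1),1),((0,1,2),2),((0,1,3),3),((0,1,4),4),((0,1,5),5),((0,1,6),6),((0,1,7),7),((0,1,8),8),((0,1,9),9),((0,1,10),10),((0,1,11),11),((0,1,12),12),((0,1,13),7),((0,1,14),13),((0,1,15),14),((1,2,0),15),((1,2,1),16),((1,2,2),17),((1,2,3),18),((1,2,4),2),((1,2,5),19),((1,2,6),4),((1,2,7),5),((1,2,8),12),((1,2,9),7),((1,2,10),13),((1,2,11),14),((2,0,0),15),((2,0,1),16),((2,0,2),0),((2,0,3),18),((2,0,4),20),((2,0,5),21),((2,0,6),22),((2,0,7),23),((0,2,0),0),((0,2,1),1),((0,2,2),2),((0,2,3),3),((0,2,4),4),((0,2,5),5),((0,2,6),6),((0,2,7),7),((0,2,8),8),((0,2,9),9),((0,2,10),10),((0,2,11),11),((0,2,12),12),((0,2,13),7),((0,2,14),13),((0,2,15),14),((2,3,0),15),((2,3,1),16),((2,3,2),0),((2,3,3),18),((2,3,4),20),((2,3,5),21),((2,3,6),22),((2,3,7),23),((3,0,0),0),((3,0,1),1),((3,0,2),2),((3,0,3),3),((3,0,4),24),((3,0,5),5),((3,0,6),6),((3,0,7),25),((3,0,8),8),((3,0,9),14),((3,0,10),15),((3,0,11),26)]"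

definition pif :: "nat \<times> nat \<times> nat \<Rightarrow> nat" where
  "pif s = (case map_of PItab s of Some c \<Rightarrow> c | None \<Rightarrow> 0)"

definition DT :: "nat list list" where
  "DT = [[0,1],[2,3],[4,5],[6,7],[8,9],[10,11],[12,7],[13,14],[15,16],[17,18],[2,19],[4,5],[12,7],[15,16],[0,18],[20,21],[22,23],[0,1],[2,3],[6,7],[24,5],[6,25],[8,14],[15,26],[8,9],[13,14],[22,23]]"

definition dlt :: "nat \<Rightarrow> nat \<Rightarrow> nat" where "dlt q d = DT ! q ! d"

definition OT :: "nat list" where
  "OT = [0,0,1,1,0,0,0,1,1,1,0,0,1,0,1,0,0,1,1,0,1,1,0,1,1,0,1]"

definition outf :: "nat \<Rightarrow> nat" where "outf q = OT ! q"

lemma RR_check: "list_all (\<lambda>s. stp s 0 \<in> set RR \<and> stp s 1 \<in> set RR \<and>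
   pif (stp s 0) = dlt (pif s) 0 \<and> pif (stp s 1) = dlt (pif s) 1 \<and>
   outf (pif s) = eta (tau (fst s)) ! (snd (snd s)) \<and> snd (snd s) < LL (fst s)) RR"
  by code_simp


lemma dlt_range: "list_all (\<lambda>q. dlt q 0 < 27 \<and> dlt q 1 < 27) [0..<27]"
  by code_simp

lemma init_facts: "(0,1,0) \<in> set RR" "pif (0,1,0) = 0"
  by code_simp+

lemma RR_prop: "s \<in> set RR \<Longrightarrow> stp s 0 \<in> set RR \<and> stp s 1 \<in> set RR \<and>
   pif (stp s 0) = dlt (pif s) 0 \<and> pif (stp s 1) = dlt (pif s) 1 \<and>
   outf (pif s) = eta (tau (fst s)) ! (snd (snd s)) \<and> snd (snd s) < LL (fst s)"
  using RR_check by (simp add: list_all_iff)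

lemma bin_digits_0: "bin_digits 0 = []" by (simp add: bin_digits.simps)
lemma bin_digits_pos: "n > 0 \<Longrightarrow> bin_digits n = bin_digits (n div 2) @ [n mod 2]"
  by (simp add: bin_digits.simps[of n])

lemma bin_digits_set: "set (bin_digits n) \<subseteq> {0,1}"
proof (induction n rule: less_induct)
  case (less n)
  show ?case
  proof (cases "n = 0")
    case True then show ?thesis by (simp add: bin_digits_0)
  next
    case False
    then have "n div 2 < n" by simp
    then show ?thesis using less False bin_digits_pos[of n] by auto
  qed
qed

lemma foldl_sim: "set ds \<subseteq> {0,1} \<Longrightarrow> s \<in> set RR \<Longrightarrow>
   foldl dlt (pif s) ds = pif (foldl stp s ds) \<and> foldl stp s ds \<in> set RR"
proof (induction ds arbitrary: s)
  case Nil then show ?case by simp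
next
  case (Cons d ds)
  have d: "d = 0 \<or> d = 1" using Cons.prems by auto
  have "dlt (pif s) d = pif (stp s d) \<and> stp s d \<in> set RR" using RR_prop[OF Cons.prems(2)] d by auto
  then show ?case using Cons.IH[of "stp s d"] Cons.prems by auto
qed

definition BB :: "nat \<Rightarrow> nat \<times> nat \<times> nat" where "BB n = foldl stp (0,1,0) (bin_digits n)"

lemma BB_RR: "BB n \<in> set RR" and BB_dfa: "foldl dlt 0 (bin_digits n) = pif (BB n)"
  using foldl_sim[OF bin_digits_set init_facts(1)] init_facts(2) by (simp_all add: BB_def)

lemma BB_0: "BB 0 = (0,1,0)" by (simp add: BB_def bin_digits_0)

lemma BB_pos: "n > 0 \<Longrightarrow> BB n = stp (BB (n div 2)) (n mod 2)"
  by (simp add: BB_def bin_digits_pos)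

lemma TT_double: "TT (2*k) = TT k"
  using WW_rec0[of k] lt4_cases[OF WW_lt4[of k]] by (auto simp: TT_def g_def)

lemma PP_double: "2 * PP k = PP (2*k) + tt (WW k)"
  using TT_double[of k] by (auto simp: PP_def tt_def TT_def)

lemma stp_sem:
  assumes "WW k = a" "WW (Suc k) = b" "c < 2" "stp (a,b,j) c = (a',b',j')"
  shows "\<exists>k'. WW k' = a' \<and> WW (Suc k') = b' \<and> 2*(PP k + j) + c = PP k' + j'"
proof -
  define off where "off = tt a + 2*j + c"
  have w0: "WW (2*k) = g a ! 0" using WW_rec0 assms by simp
  have w1: "WW (Suc (2*k)) = g a ! 1" using WW_rec1 assms by simp
  have w2: "WW (Suc (Suc (2*k))) = g b ! 0" using WW_rec0[of "Suc k"] assms by simp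
  have w3: "WW (Suc (Suc (Suc (2*k)))) = g b ! 1" using WW_rec1[of "Suc k"] assms by simp
  have pos: "2*(PP k + j) + c = PP (2*k) + off" using PP_double[of k] assms by (simp add: off_def)
  have p1: "PP (Suc (2*k)) = PP (2*k) + LL (g a ! 0)" using PP_Suc w0 by simp
  have p2: "PP (Suc (Suc (2*k))) = PP (2*k) + LL (g a ! 0) + LL (g a ! 1)" using PP_Suc[of "Suc (2*k)"] w1 p1 by simp
  show ?thesis
  proof (cases "off < LL (g a ! 0)")
    case True
    then have "a' = g a ! 0" "b' = g a ! 1" "j' = off" using assms(4) by (simp_all add: stp_def Let_def off_def)
    then show ?thesis using w0 w1 pos by (intro exI[of _ "2*k"]) simp
  next
    case F1: False
    show ?thesis
    proof (cases "off < LL (g a ! 0) + LL (g a ! 1)")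
      case True
      then have "a' = g a ! 1" "b' = g b ! 0" "j' = off - LL (g a ! 0)" using F1 assms(4) by (simp_all add: stp_def Let_def off_def)
      then show ?thesis using w1 w2 pos p1 F1 by (intro exI[of _ "Suc (2*k)"]) simp
    next
      case False
      then have "a' = g b ! 0" "b' = g b ! 1" "j' = off - LL (g a ! 0) - LL (g a ! 1)" using F1 assms(4) by (simp_all add: stp_def Let_def off_def)
      then show ?thesis using w2 w3 pos p2 False by (intro exI[of _ "Suc (Suc (2*k))"]) simp
    qed
  qed
qed

lemma BB_sem: "BB n = (a,b,j) \<Longrightarrow> \<exists>k. WW k = a \<and> WW (Suc k) = b \<and> n = PP k + j"
proof (induction n arbitrary: a b j rule: less_induct)
  case (less n)
  show ?case
  proof (cases "n = 0")
    case True
    then have "a = 0" "b = 1" "j = 0" using less.prems BB_0 by simp_all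
    moreover have "WW (Suc 0) = 1" using WW_rec1[of 0] by (simp add: g_def)
    ultimately show ?thesis using True by (intro exI[of _ 0]) simp
  next
    case False
    obtain a0 b0 j0 where s0: "BB (n div 2) = (a0,b0,j0)" by (cases "BB (n div 2)") auto
    have "n div 2 < n" using False by simp
    then obtain k where k: "WW k = a0" "WW (Suc k) = b0" "n div 2 = PP k + j0" using less.IH s0 by blast
    have st: "stp (a0,b0,j0) (n mod 2) = (a,b,j)" using BB_pos[of n] False s0 less.prems by simp
    obtain k' where "WW k' = a" "WW (Suc k') = b" "2*(PP k + j0) + n mod 2 = PP k' + j"
      using stp_sem[OF k(1,2) _ st] by auto
    moreover have "n = 2*(n div 2) + n mod 2" by simp
    ultimately show ?thesis using k(3) by metis
  qed
qed

theorem automatic: "two_automatic_with 27 ww"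
  unfolding two_automatic_with_def dfao_generates_def
proof (intro exI conjI allI impI)
  show "(0::nat) < 27" by simp
next
  fix q d :: nat assume "q < 27" "d < 2"
  then show "dlt q d < 27" using dlt_range by (auto simp: list_all_iff less_2_cases_iff)
next
  fix n
  obtain a b j where s: "BB n = (a,b,j)" by (cases "BB n") auto
  obtain k where k: "WW k = a" "n = PP k + j" using BB_sem[OF s] by blast
  have p: "outf (pif (BB n)) = eta (tau a) ! j \<and> j < LL a" using RR_prop[OF BB_RR[of n]] s by simp
  have "ww n = blk k ! j" using ww_blk[of j k] k p by simp
  then show "outf (foldl dlt 0 (bin_digits n)) = ww n" using p k BB_dfa by (simp add: blk_def vtm_WW)
qed



lemma TT_2: "TT (2*k) = TT k"
  using WW_rec0[of k] lt4_cases[OF WW_lt4[of k]] by (auto simp: TT_def g_def)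

lemma TT_2S: "TT (Suc (2*k)) = (\<not> TT k)"
  using WW_rec1[of k] lt4_cases[OF WW_lt4[of k]] by (auto simp: TT_def g_def)

lemma TT_pair: "even y \<Longrightarrow> TT y \<noteq> TT (Suc y)"
  using TT_2 TT_2S by (metis evenE)

lemma no_overlap: "p > 0 \<Longrightarrow> \<exists>x\<le>p. TT (i+x) \<noteq> TT (i+p+x)"
proof (induction p arbitrary: i rule: less_induct)
  case (less p)
  show ?case
  proof (rule ccontr)
    assume "\<not> ?case"
    then have ov: "\<And>x. x \<le> p \<Longrightarrow> TT (i+x) = TT (i+p+x)" by auto
    show False
    proof (cases "even p")
      case True
      then obtain q where q: "p = 2*q" by blast
      have q0: "0 < q" "q < p" using q less.prems by auto
      define i' where "i' = i div 2"
      obtain x where x: "x \<le> q" "TT (i'+x) \<noteq> TT (i'+q+x)" using less.IH[OF q0(2) q0(1)] by blast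
      have "2*x \<le> p" using x q by simp
      note o = ov[OF this]
      show False
      proof (cases "even i")
        case True
        then have i: "i = 2*i'" by (simp add: i'_def)
        have "TT (i'+x) = TT (i + 2*x)" using TT_2[of "i'+x"] i by (simp add: algebra_simps)
        also have "\<dots> = TT (i+p+2*x)" using o by simp
        also have "\<dots> = TT (i'+q+x)" using TT_2[of "i'+q+x"] i q by (simp add: algebra_simps)
        finally show False using x by simp
      next
        case False
        then have i: "i = Suc (2*i')" by (simp add: i'_def)
        have "TT (i'+x) = (\<not> TT (i + 2*x))" using TT_2S[of "i'+x"] i by (simp add: algebra_simps)
        also have "\<dots> = (\<not> TT (i+p+2*x))" using o by simp
        also have "\<dots> = TT (i'+q+x)" using TT_2S[of "i'+q+x"] i q by (simp add: algebra_simps)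
        finally show False using x by simp
      qed
    next
      case False
      have alt: "TT (i+x) \<noteq> TT (Suc (i+x))" if "x < 2*p" for x
      proof (cases "even (i+x)")
        case True then show ?thesis using TT_pair by blast
      next
        case odd: False
        show ?thesis
        proof (cases "p \<le> x")
          case True
          have e: "even (i + (x-p))" using odd False True by (simp add: odd_add)
          have "TT (i + (x-p)) \<noteq> TT (Suc (i + (x-p)))" using TT_pair[OF e] .
          moreover have "TT (i + (x-p)) = TT (i+x)" using ov[of "x-p"] that True by simp
          moreover have "TT (Suc (i + (x-p))) = TT (Suc (i+x))" using ov[of "Suc (x-p)"] that True by simp
          ultimately show ?thesis by simp
        next
          case xp: False
          have e: "even (i + x + p)" using odd False by (simp add: odd_add)
          have "TT (i + x + p) \<noteq> TT (Suc (i + x + p))" using TT_pair[OF e] .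
          moreover have "TT (i+x) = TT (i+x+p)" using ov[of x] xp by (simp add: algebra_simps)
          moreover have "TT (Suc (i+x)) = TT (Suc (i+x+p))" using ov[of "Suc x"] xp by (simp add: algebra_simps)
          ultimately show ?thesis by simp
        qed
      qed
      show False
      proof (cases "p = 1")
        case True
        then show False using alt[of 0] ov[of 0] by simp
      next
        case p1: False
        then have p3: "p \<ge> 3" using False less.prems by presburger
        define m where "m = (i+1) div 2"
        have m: "i \<le> 2*m" "2*m \<le> i+1" unfolding m_def by presburger+
        define x0 where "x0 = 2*m - i"
        have x0: "i + x0 = 2*m" "x0 + 3 < 2*p" using m p3 by (auto simp: x0_def)
        have altm: "TT (2*m+k) \<noteq> TT (2*m+k+1)" if "k \<le> 3" for k
        proof -
          have "x0 + k < 2*p" using x0 that by simp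
          from alt[OF this] have "TT (i + (x0 + k)) \<noteq> TT (Suc (i + (x0+k)))" .
          moreover have "i + (x0+k) = 2*m+k" using x0 by simp
          ultimately show ?thesis by simp
        qed
        have a0: "TT (2*m+0) \<noteq> TT (2*m+0+1)" by (rule altm) simp
        have a1: "TT (2*m+1) \<noteq> TT (2*m+1+1)" by (rule altm) simp
        have a2: "TT (2*m+2) \<noteq> TT (2*m+2+1)" by (rule altm) simp
        have a3: "TT (2*m+3) \<noteq> TT (2*m+3+1)" by (rule altm) simp
        have t0: "TT (2*m+0) = TT m" using TT_2[of m] by simp
        have t2: "TT (2*m+2) = TT (Suc m)" using TT_2[of "Suc m"] by simp
        have t4: "TT (2*m+3+1) = TT (Suc (Suc m))" using TT_2[of "Suc (Suc m)"] by (simp add: numeral_eq_Suc)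
        have e1: "2*m+0+1 = 2*m+1" "2*m+1+1 = 2*m+2" "2*m+2+1 = 2*m+3" by simp_all
        have "TT m = TT (Suc m)" "TT (Suc m) = TT (Suc (Suc m))"
          using a0 a1 a2 a3 t0 t2 t4 unfolding e1 by auto
        moreover have "TT m \<noteq> TT (Suc m) \<or> TT (Suc m) \<noteq> TT (Suc (Suc m))"
          using TT_pair[of m] TT_pair[of "Suc m"] by (cases "even m") auto
        ultimately show False by simp
      qed
    qed
  qed
qed

lemma vtm_TT: "vtm k = (if TT k = TT (Suc k) then 1 else if TT k then 0 else 2)"
  using WW_pair[of k] by (auto simp: vtm_WW TT_def F2set_def tau_def)

lemma fprop2: "vtm k = vtm k' \<Longrightarrow> ((TT (Suc k) = TT (Suc k')) = (TT k = TT k')) \<and> (vtm k \<noteq> 1 \<longrightarrow> TT k = TT k')"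
  using vtm_TT[of k] vtm_TT[of k']
  by (cases "TT k"; cases "TT (Suc k)"; cases "TT k'"; cases "TT (Suc k')") simp_all

lemma vtm_sqfree: "q > 0 \<Longrightarrow> \<exists>x<q. vtm (i+x) \<noteq> vtm (i+q+x)"
proof (rule ccontr)
  assume q: "q > 0" and "\<not> (\<exists>x<q. vtm (i+x) \<noteq> vtm (i+q+x))"
  then have eq: "\<And>x. x < q \<Longrightarrow> vtm (i+x) = vtm (i+q+x)" by auto
  have fp1: "(TT (Suc (i+x)) = TT (Suc (i+q+x))) = (TT (i+x) = TT (i+q+x))" if "x < q" for x
    using fprop2[OF eq[OF that]] by blast
  have fp2: "vtm (i+x) \<noteq> 1 \<Longrightarrow> TT (i+x) = TT (i+q+x)" if "x < q" for x
    using fprop2[OF eq[OF that]] by blast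
  show False
  proof (cases "TT i = TT (i+q)")
    case True
    have "TT (i+x) = TT (i+q+x)" if "x \<le> q" for x
      using that
    proof (induction x)
      case 0 then show ?case using True by simp
    next
      case (Suc x)
      then have xq: "x < q" by simp
      then have "TT (i+x) = TT (i+q+x)" using Suc.IH by simp
      then have "TT (Suc (i+x)) = TT (Suc (i+q+x))" using fp1[OF xq] by blast
      then show ?case by simp
    qed
    then have "\<forall>x\<le>q. TT (i+x) = TT (i+q+x)" by blast
    then show False using no_overlap[OF q, of i] by blast
  next
    case False
    have "TT (i+x) \<noteq> TT (i+q+x) \<and> TT (i+x) = TT i" if "x \<le> q" for x
      using that
    proof (induction x)
      case 0 then show ?case using False by simp
    next
      case (Suc x)
      then have xq: "x < q" by simp
      have ihc: "TT (i+x) \<noteq> TT (i+q+x) \<and> TT (i+x) = TT i" using Suc.IH[OF less_imp_le[OF xq]] .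
      then have ih: "TT (i+x) \<noteq> TT (i+q+x)" "TT (i+x) = TT i" by blast+
      have v1: "vtm (i+x) = 1" using fp2[OF xq] ih(1) by blast
      have "TT (i+x) = TT (Suc (i+x))"
      proof (rule ccontr)
        assume ne: "TT (i+x) \<noteq> TT (Suc (i+x))"
        have "vtm (i+x) = (if TT (i+x) then 0 else 2)" using vtm_TT[of "i+x"] ne by simp
        then show False using v1 by (cases "TT (i+x)") simp_all
      qed
      moreover have "TT (Suc (i+x)) \<noteq> TT (Suc (i+q+x))" using fp1[OF xq] ih(1) by blast
      ultimately show ?case using ih(2) by simp
    qed
    from this[of q] have "TT (i+q) = TT i" by blast
    then show False using False by simp
  qed
qed



definition ET :: "nat \<Rightarrow> nat list" where "ET a = eta (tau a)"

definition F5 :: "nat list list" where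
  "F5 = [[0,1,2,0,2],[0,1,2,3,0],[0,2,0,1,2],[0,2,3,0,1],[0,2,3,0,2],[1,2,0,2,3],[1,2,3,0,1],[1,2,3,0,2],[2,0,1,2,0],[2,0,1,2,3],[2,0,2,3,0],[2,3,0,1,2],[2,3,0,2,0],[3,0,1,2,0],[3,0,1,2,3],[3,0,2,0,1]]"

definition Pref3 :: "nat list list" where
  "Pref3 = [[0,0,1,1,0,0,0,1],[0,0,1,1,1,0,0,0],[0,0,0,1,1,1,0,1]]"

lemma chk_F5: "list_all (\<lambda>v. take 5 (concat (map g v)) \<in> set F5 \<and> take 5 (drop 1 (concat (map g v))) \<in> set F5) F5"
  by code_simp

lemma chk_R: "list_all (\<lambda>a. list_all (\<lambda>b. list_all (\<lambda>j.
   ((ET a @ ET b) ! j = 1 \<and> (ET a @ ET b) ! (j+1) = 0 \<and> (ET a @ ET b) ! (j+2) = 1 \<longleftrightarrow> j + 3 = LL a) \<and>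
   (take 8 (drop j (ET a @ ET b)) \<in> set Pref3 \<longleftrightarrow> j = 0)) [0..<LL a]) [0..<4]) [0..<4]"
  by code_simp

lemma chk_pref: "list_all (\<lambda>a. list_all (\<lambda>b.
   take (min (LL a) (LL b)) (ET a) = take (min (LL a) (LL b)) (ET b) \<longrightarrow> tau a = tau b) [0..<4]) [0..<4]"
  by code_simp

lemma chk_XYZ: "list_all (\<lambda>x. list_all (\<lambda>y. list_all (\<lambda>z. list_all (\<lambda>m.
   (take m (ET x) = take m (ET y) \<and> m \<le> LL y \<and> LL x - m < LL z \<and>
    drop m (ET x) = drop (LL z - (LL x - m)) (ET z)) \<longrightarrow> tau x = tau y \<or> tau x = tau z)
   [1..<LL x]) [0..<4]) [0..<4]) [0..<4]"
  by code_simp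

lemma chk_small: "list_all (\<lambda>v. list_all (\<lambda>j. list_all (\<lambda>p.
   take p (take (2*p) (drop j (concat (map ET v)))) = drop p (take (2*p) (drop j (concat (map ET v))))
   \<longrightarrow> take (2*p) (drop j (concat (map ET v))) \<in> {[0,0],[1,1],[1,0,1,0]}) [1..<16]) [0..<LL (hd v)]) F5"
  by code_simp



lemma blk_ET: "blk k = ET (WW k)" by (simp add: blk_def ET_def vtm_WW)
lemma ET_len: "length (ET a) = LL a" by (simp add: ET_def LL_def)

lemma win2: "e < LL (WW k) + LL (WW (Suc k)) \<Longrightarrow> ww (PP k + e) = (ET (WW k) @ ET (WW (Suc k))) ! e"
proof -
  assume e: "e < LL (WW k) + LL (WW (Suc k))"
  have "PP (k+2) - PP k = LL (WW k) + LL (WW (Suc k))"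
    using PP_Suc[of k] PP_Suc[of "Suc k"] by (simp add: numeral_2_eq_2)
  then have "ww (PP k + e) = concat (map blk [k..<k+2]) ! e" using ww_window[of e k 2] e by simp
  also have "[k..<k+2] = [k, Suc k]" by (simp add: numeral_2_eq_2)
  finally show ?thesis by (simp add: blk_ET)
qed

lemma R_facts: "a < 4 \<Longrightarrow> b < 4 \<Longrightarrow> j < LL a \<Longrightarrow>
   ((ET a @ ET b) ! j = 1 \<and> (ET a @ ET b) ! (j+1) = 0 \<and> (ET a @ ET b) ! (j+2) = 1 \<longleftrightarrow> j + 3 = LL a) \<and>
   (take 8 (drop j (ET a @ ET b)) \<in> set Pref3 \<longleftrightarrow> j = 0)"
  using chk_R by (simp add: list_all_iff)

lemma bd_PP[simp]: "bd (PP k)" by (auto simp: bd_def)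

lemma R1: assumes "n \<ge> 3" shows "bd n \<longleftrightarrow> (ww (n-3) = 1 \<and> ww (n-2) = 0 \<and> ww (n-1) = 1)"
proof -
  obtain k j where kj: "n - 3 = PP k + j" "j < LL (WW k)" using decomp by blast
  let ?S = "ET (WW k) @ ET (WW (Suc k))"
  have l2: "LL (WW (Suc k)) \<ge> 8" by (rule LL_WW_ge8)
  have n3: "n-2 = PP k + (j+1)" "n-1 = PP k + (j+2)" using kj assms by auto
  have w: "ww (n-3) = ?S ! j" "ww (n-2) = ?S ! (j+1)" "ww (n-1) = ?S ! (j+2)"
    using win2[of j k] win2[of "j+1" k] win2[of "j+2" k] kj l2 n3 by auto
  have chk: "(?S!j = 1 \<and> ?S!(j+1) = 0 \<and> ?S!(j+2) = 1) \<longleftrightarrow> j + 3 = LL (WW k)"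
    using R_facts[OF WW_lt4 WW_lt4 kj(2)] by blast
  have nn: "n = PP k + j + 3" using kj assms by simp
  have "bd n \<longleftrightarrow> j + 3 = LL (WW k)"
  proof
    assume "j + 3 = LL (WW k)"
    then have "n = PP (Suc k)" using nn PP_Suc by simp
    then show "bd n" by simp
  next
    assume b: "bd n"
    show "j + 3 = LL (WW k)"
    proof (rule ccontr)
      assume ne: "j + 3 \<noteq> LL (WW k)"
      show False
      proof (cases "j + 3 < LL (WW k)")
        case True
        then have "PP k < n" "n < PP (Suc k)" using nn PP_Suc by auto
        then show False using not_bd_between b by blast
      next
        case False
        then have "PP (Suc k) < n" "n < PP (Suc (Suc k))" using nn PP_Suc[of k] PP_Suc[of "Suc k"] ne l2 kj(2) by auto
        then show False using not_bd_between b by blast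
      qed
    qed
  qed
  then show ?thesis using w chk by simp
qed

lemma R2: "bd n \<longleftrightarrow> map ww [n..<n+8] \<in> set Pref3"
proof -
  obtain k j where kj: "n = PP k + j" "j < LL (WW k)" using decomp by blast
  let ?S = "ET (WW k) @ ET (WW (Suc k))"
  have l2: "LL (WW (Suc k)) \<ge> 8" by (rule LL_WW_ge8)
  have m: "map ww [n..<n+8] = take 8 (drop j ?S)"
  proof (rule nth_equalityI)
    show "length (map ww [n..<n+8]) = length (take 8 (drop j ?S))" using kj l2 by (simp add: ET_len)
  next
    fix e assume "e < length (map ww [n..<n+8])"
    then have e: "e < 8" by simp
    have "ww (n+e) = ?S ! (j+e)" using win2[of "j+e" k] kj l2 e by (simp add: add.assoc)
    moreover have "take 8 (drop j ?S) ! e = drop j ?S ! e" by (rule nth_take[OF e])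
    moreover have "drop j ?S ! e = ?S ! (j+e)" by (rule nth_drop) (use kj in \<open>simp add: ET_len\<close>)
    ultimately show "map ww [n..<n+8] ! e = take 8 (drop j ?S) ! e" using e kj by simp
  qed
  have chk: "take 8 (drop j ?S) \<in> set Pref3 \<longleftrightarrow> j = 0"
    using R_facts[OF WW_lt4 WW_lt4 kj(2)] by blast
  have "bd n \<longleftrightarrow> j = 0"
  proof
    assume b: "bd n"
    show "j = 0"
    proof (rule ccontr)
      assume "j \<noteq> 0"
      then have "PP k < n" "n < PP (Suc k)" using kj PP_Suc by auto
      then show False using not_bd_between b by blast
    qed
  qed (simp add: kj)
  then show ?thesis using m chk by simp
qed

lemma LL_tau: "a < 4 \<Longrightarrow> b < 4 \<Longrightarrow> LL a = LL b \<Longrightarrow> tau a = tau b"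
proof -
  assume a: "a < 4" and b: "b < 4" and l: "LL a = LL b"
  from lt4_cases[OF a] lt4_cases[OF b] l show ?thesis by (elim disjE) (simp_all add: tau_def)
qed

lemma vtm_eq_LL: "LL (WW k) = LL (WW k') \<Longrightarrow> vtm k = vtm k'"
  unfolding vtm_WW by (rule LL_tau[OF WW_lt4 WW_lt4])

lemma pref_fact: "a < 4 \<Longrightarrow> b < 4 \<Longrightarrow> take (min (LL a) (LL b)) (ET a) = take (min (LL a) (LL b)) (ET b) \<Longrightarrow> tau a = tau b"
proof -
  assume a: "a < 4" and b: "b < 4" and t: "take (min (LL a) (LL b)) (ET a) = take (min (LL a) (LL b)) (ET b)"
  have h: "a \<in> set [0..<4]" "b \<in> set [0..<4]" using a b by simp_all
  from chk_pref have "\<forall>a\<in>set [0..<4]. \<forall>b\<in>set [0..<4]. take (min (LL a) (LL b)) (ET a) = take (min (LL a) (LL b)) (ET b) \<longrightarrow> tau a = tau b"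
    by (simp only: list_all_iff)
  then show ?thesis using h t by blast
qed

lemma XYZ_fact: "x < 4 \<Longrightarrow> y < 4 \<Longrightarrow> z < 4 \<Longrightarrow> 1 \<le> m \<Longrightarrow> m < LL x \<Longrightarrow>
   take m (ET x) = take m (ET y) \<Longrightarrow> m \<le> LL y \<Longrightarrow> LL x - m < LL z \<Longrightarrow>
   drop m (ET x) = drop (LL z - (LL x - m)) (ET z) \<Longrightarrow> tau x = tau y \<or> tau x = tau z"
proof -
  assume x: "x < 4" and y: "y < 4" and z: "z < 4" and m: "1 \<le> m" "m < LL x"
    and c: "take m (ET x) = take m (ET y)" "m \<le> LL y" "LL x - m < LL z"
       "drop m (ET x) = drop (LL z - (LL x - m)) (ET z)"
  have h: "x \<in> set [0..<4]" "y \<in> set [0..<4]" "z \<in> set [0..<4]" "m \<in> set [1..<LL x]" using x y z m by simp_all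
  from chk_XYZ have "\<forall>x\<in>set [0..<4]. \<forall>y\<in>set [0..<4]. \<forall>z\<in>set [0..<4]. \<forall>m\<in>set [1..<LL x].
   (take m (ET x) = take m (ET y) \<and> m \<le> LL y \<and> LL x - m < LL z \<and>
    drop m (ET x) = drop (LL z - (LL x - m)) (ET z)) \<longrightarrow> tau x = tau y \<or> tau x = tau z"
    by (simp only: list_all_iff)
  then show ?thesis using h c by blast
qed



lemma LL_le16: "a < 4 \<Longrightarrow> LL a \<le> 16"
  using lt4_cases[of a] by auto

lemma sq_core:
  assumes q: "q > 0" and inner: "\<And>r. Suc r < q \<Longrightarrow> vtm (k1+r) = vtm (k1+q+r)"
    and last: "vtm (k1+q-1) = vtm (k1+q+(q-1))"
  shows False
proof -
  have "\<forall>r<q. vtm (k1+r) = vtm (k1+q+r)"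
  proof (intro allI impI)
    fix r assume r: "r < q"
    show "vtm (k1+r) = vtm (k1+q+r)"
    proof (cases "Suc r < q")
      case True then show ?thesis using inner by blast
    next
      case False
      then have "r = q - 1" using r by simp
      then show ?thesis using last q by simp
    qed
  qed
  then show False using vtm_sqfree[OF q, of k1] by blast
qed

lemma big_square:
  assumes p16: "p \<ge> 16" and sq: "\<forall>x<p. ww (i+x) = ww (i+p+x)"
  shows False
proof -
  have sh: "ww y = ww (y+p)" if "i \<le> y" "y < i+p" for y
    using sq[rule_format, of "y-i"] that by (simp add: algebra_simps)
  have bd_shift: "bd n = bd (n+p)" if n: "i \<le> n" "n \<le> i+p" for n
  proof (cases "n \<ge> i+3")
    case True
    have n3: "n \<ge> 3" "n + p \<ge> 3" using True by simp_all
    have e1: "ww (n-3) = ww (n-3+p)" by (rule sh) (use True n p16 in linarith)+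
    have e2: "ww (n-2) = ww (n-2+p)" by (rule sh) (use True n p16 in linarith)+
    have e3: "ww (n-1) = ww (n-1+p)" by (rule sh) (use True n p16 in linarith)+
    have f: "n+p-3 = n-3+p" "n+p-2 = n-2+p" "n+p-1 = n-1+p" using True by simp_all
    show ?thesis by (simp only: R1[OF n3(1)] R1[OF n3(2)] f e1 e2 e3)
  next
    case False
    have "map ww [n..<n+8] = map ww [n+p..<n+p+8]"
    proof (rule nth_equalityI)
      fix e assume "e < length (map ww [n..<n+8])"
      then have e: "e < 8" by simp
      have h: "ww (n+e) = ww (n+e+p)" by (rule sh) (use e False n p16 in linarith)+
      have l: "map ww [n..<n+8] ! e = ww (n+e)" using e by simp
      have r: "map ww [n+p..<n+p+8] ! e = ww (n+p+e)" using e by simp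
      have f: "n+p+e = n+e+p" by simp
      show "map ww [n..<n+8] ! e = map ww [n+p..<n+p+8] ! e" by (simp only: l r f h)
    qed simp
    then show ?thesis by (simp only: R2[of n] R2[of "n+p"])
  qed
  obtain k0 j0 where kj0: "i = PP k0 + j0" "j0 < LL (WW k0)" using decomp by blast
  define k1 where "k1 = (if j0 = 0 then k0 else Suc k0)"
  define b0 where "b0 = PP k1"
  have b0i: "i \<le> b0" "b0 \<le> i + 16"
    using kj0 PP_Suc[of k0] LL_le16[OF WW_lt4[of k0]] by (auto simp: b0_def k1_def)
  have nobd: "\<not> bd n" if "i < n" "n < b0" for n
  proof (cases "j0 = 0")
    case True then show ?thesis using that by (simp add: b0_def k1_def kj0)
  next
    case False
    then have "PP k0 < n" "n < PP (Suc k0)" using that kj0 by (simp_all add: b0_def k1_def)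
    then show ?thesis by (rule not_bd_between)
  qed
  have "bd (b0 + p)" using bd_shift[of b0] b0i p16 by (simp add: b0_def)
  then obtain k2 where k2: "b0 + p = PP k2" by (auto simp: bd_def)
  have "PP k1 < PP k2" using k2 p16 by (simp add: b0_def)
  then have k12: "k1 < k2" by (simp add: PP_less_iff)
  define q where "q = k2 - k1"
  have q0: "q > 0" and k2q: "k2 = k1 + q" using k12 by (simp_all add: q_def)
  have claim1: "PP (k1+r) \<le> i+p" if r: "r < q" for r
  proof (rule ccontr)
    assume "\<not> PP (k1+r) \<le> i+p"
    then have gt: "i + p < PP (k1+r)" by simp
    have "PP (k1+r) < PP k2" using r k2q by (simp add: PP_less_iff)
    define n where "n = PP (k1+r) - p"
    have n: "i < n" "n < b0" "n + p = PP (k1+r)" using gt \<open>PP (k1+r) < PP k2\<close> k2 by (simp_all add: n_def)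
    have "bd n" using bd_shift[of n] n b0i p16 by simp
    then show False using nobd n by blast
  qed
  have claim2: "PP (k1+r) + p = PP (k2+r)" if "r < q" for r
    using that
  proof (induction r)
    case 0 then show ?case using k2 by (simp add: b0_def)
  next
    case (Suc r)
    have ih: "PP (k1+r) + p = PP (k2+r)" using Suc by simp
    have c1: "PP (k1 + Suc r) \<le> i+p" using claim1 Suc.prems by blast
    have ge: "b0 \<le> PP (k1 + Suc r)" using PP_le_iff[of k1 "k1 + Suc r"] by (simp add: b0_def)
    have "bd (PP (k1 + Suc r) + p)" using bd_shift[of "PP (k1 + Suc r)"] c1 ge b0i by simp
    then obtain k' where k': "PP (k1 + Suc r) + p = PP k'" by (auto simp: bd_def)
    have "PP (k1 + r) < PP (k1 + Suc r)" by (simp add: PP_less_iff)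
    then have "PP (k2+r) < PP k'" using ih k' by simp
    then have kk: "k2 + r < k'" by (simp add: PP_less_iff)
    show ?case
    proof (rule ccontr)
      assume ne: "PP (k1 + Suc r) + p \<noteq> PP (k2 + Suc r)"
      then have "k' \<noteq> Suc (k2 + r)" using k' by auto
      then have "Suc (k2+r) < k'" using kk by simp
      then have lt: "PP (Suc (k2+r)) < PP k'" by (simp add: PP_less_iff)
      have gt: "PP (k2+r) < PP (Suc (k2+r))" by (simp add: PP_less_iff)
      define n where "n = PP (Suc (k2+r)) - p"
      have n: "PP (k1+r) < n" "n < PP (Suc (k1+r))" "n + p = PP (Suc (k2+r))"
        using lt gt ih k' by (simp_all add: n_def)
      have "b0 \<le> PP (k1+r)" using PP_le_iff[of k1 "k1 + r"] by (simp add: b0_def)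
      then have "bd n" using bd_shift[of n] n b0i c1 by simp
      then show False using not_bd_between[OF n(1) n(2)] by blast
    qed
  qed
  have inner: "vtm (k1+r) = vtm (k1+q+r)" if r: "Suc r < q" for r
  proof -
    have a: "PP (k1+r) + p = PP (k2+r)" using claim2 r by simp
    have b: "PP (k1+Suc r) + p = PP (k2+Suc r)" using claim2 r by blast
    have "LL (WW (k1+r)) = LL (WW (k2+r))" using a b PP_Suc[of "k1+r"] PP_Suc[of "k2+r"] by simp
    then have "vtm (k1+r) = vtm (k2+r)" by (rule vtm_eq_LL)
    then show ?thesis using k2q by simp
  qed
  define kx where "kx = k1 + q - 1"
  have kx: "Suc kx = k2" "kx + q = k2 + (q - 1)" using q0 k2q by (simp_all add: kx_def)
  have pkx: "PP kx \<le> i+p" using claim1[of "q-1"] q0 by (simp add: kx_def)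
  have pkxq: "PP kx + p = PP (kx+q)" using claim2[of "q-1"] q0 kx by (simp add: kx_def)
  have pskx: "PP (Suc kx) = b0 + p" using kx k2 by simp
  have kx_ge: "PP k1 \<le> PP kx" using q0 by (simp add: PP_le_iff kx_def)
  have lastXY: False if tXY: "tau (WW kx) = tau (WW (kx+q))"
  proof -
    have "vtm (k1+q-1) = vtm (k1+q+(q-1))" using tXY q0 by (simp add: vtm_WW kx_def)
    then show False using sq_core[OF q0 inner] by blast
  qed
  show False
  proof (cases "j0 = 0")
    case True
    then have b0: "b0 = i" using kj0 by (simp add: b0_def k1_def)
    define mm where "mm = min (LL (WW kx)) (LL (WW (kx+q)))"
    have lx: "LL (WW kx) = i + p - PP kx" using PP_Suc[of kx] pskx b0 by simp
    have tk: "take mm (ET (WW kx)) = take mm (ET (WW (kx+q)))"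
    proof (rule nth_equalityI)
      show "length (take mm (ET (WW kx))) = length (take mm (ET (WW (kx+q))))" by (simp add: ET_len mm_def)
    next
      fix e assume "e < length (take mm (ET (WW kx)))"
      then have e: "e < LL (WW kx)" "e < LL (WW (kx+q))" "e < mm" by (simp_all add: ET_len mm_def)
      have i1: "i \<le> PP kx + e" using kx_ge b0 by (simp add: b0_def)
      have i2: "PP kx + e < i + p" using e(1) lx pkx by linarith
      have h: "ww (PP kx + e) = ww (PP kx + e + p)" using sh[OF i1 i2] .
      have h1: "ww (PP kx + e) = ET (WW kx) ! e" using ww_blk[OF e(1)] by (simp add: blk_ET)
      have f: "PP kx + e + p = PP (kx+q) + e" using pkxq by linarith
      have h2: "ww (PP (kx+q) + e) = ET (WW (kx+q)) ! e" using ww_blk[OF e(2)] by (simp add: blk_ET)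
      have "ET (WW kx) ! e = ET (WW (kx+q)) ! e" using h h1 h2 f by metis
      then show "take mm (ET (WW kx)) ! e = take mm (ET (WW (kx+q))) ! e" using e by simp
    qed
    have "tau (WW kx) = tau (WW (kx+q))" by (rule pref_fact[OF WW_lt4 WW_lt4]) (use tk in \<open>simp only: mm_def\<close>)
    then show False by (rule lastXY)
  next
    case False
    have k1s: "k1 = Suc k0" using False by (simp add: k1_def)
    have b0s: "b0 = PP k0 + LL (WW k0)" using k1s PP_Suc by (simp add: b0_def)
    define s where "s = b0 - i"
    have s: "s = LL (WW k0) - j0" "1 \<le> s" using b0s kj0 by (simp_all add: s_def)
    have "PP kx \<noteq> i + p"
    proof
      assume "PP kx = i + p"
      then have "bd (i+p)" by (metis bd_PP)
      then have "bd i" using bd_shift[of i] by simp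
      moreover have "PP k0 < i" "i < PP (Suc k0)" using kj0 False PP_Suc by simp_all
      ultimately show False using not_bd_between by blast
    qed
    then have pkx': "PP kx < i + p" using pkx by simp
    define m where "m = i + p - PP kx"
    have m1: "1 \<le> m" using pkx' by (simp add: m_def)
    have lx: "LL (WW kx) = m + s" using PP_Suc[of kx] pskx b0i pkx' unfolding m_def s_def by linarith
    have gtk: "i < PP kx" using kx_ge b0s kj0 k1s s unfolding b0_def by linarith
    have my: "m \<le> LL (WW (kx+q))"
    proof (rule ccontr)
      assume "\<not> m \<le> LL (WW (kx+q))"
      then have lt: "LL (WW (kx+q)) < m" by simp
      define n where "n = PP kx + LL (WW (kx+q))"
      have n1: "PP kx < n" using LL_WW_ge8[of "kx+q"] unfolding n_def by linarith
      have n2: "n < PP (Suc kx)" using lt lx PP_Suc[of kx] unfolding n_def by linarith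
      have n3: "n + p = PP (Suc (kx+q))" using PP_Suc[of "kx+q"] pkxq unfolding n_def by linarith
      have n4: "n \<le> i + p" using lt pkx' unfolding n_def m_def by linarith
      have "bd (n + p)" using n3 by (metis bd_PP)
      then have "bd n" using bd_shift[of n] n1 gtk n4 by simp
      then show False using not_bd_between[OF n1 n2] by blast
    qed
    have tk: "take m (ET (WW kx)) = take m (ET (WW (kx+q)))"
    proof (rule nth_equalityI)
      show "length (take m (ET (WW kx))) = length (take m (ET (WW (kx+q))))" using lx my by (simp add: ET_len)
    next
      fix e assume "e < length (take m (ET (WW kx)))"
      then have e: "e < m" by (simp add: ET_len)
      then have e2: "e < LL (WW kx)" "e < LL (WW (kx+q))" using lx my s by simp_all
      have i1: "i \<le> PP kx + e" using gtk by linarith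
      have i2: "PP kx + e < i + p" using e unfolding m_def by linarith
      have h: "ww (PP kx + e) = ww (PP kx + e + p)" using sh[OF i1 i2] .
      have h1: "ww (PP kx + e) = ET (WW kx) ! e" using ww_blk[OF e2(1)] by (simp add: blk_ET)
      have f: "PP kx + e + p = PP (kx+q) + e" using pkxq by linarith
      have h2: "ww (PP (kx+q) + e) = ET (WW (kx+q)) ! e" using ww_blk[OF e2(2)] by (simp add: blk_ET)
      have "ET (WW kx) ! e = ET (WW (kx+q)) ! e" using h h1 h2 f by metis
      then show "take m (ET (WW kx)) ! e = take m (ET (WW (kx+q))) ! e" using e by simp
    qed
    have idx: "LL (WW k0) - (LL (WW kx) - m) = j0" using lx s kj0 by simp
    have dk: "drop m (ET (WW kx)) = drop (LL (WW k0) - (LL (WW kx) - m)) (ET (WW k0))"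
      unfolding idx
    proof (rule nth_equalityI)
      show "length (drop m (ET (WW kx))) = length (drop j0 (ET (WW k0)))"
        using lx s kj0 by (simp add: ET_len)
    next
      fix e assume "e < length (drop m (ET (WW kx)))"
      then have e: "e < s" using lx by (simp add: ET_len)
      have e1: "j0 + e < LL (WW k0)" using e s by simp
      have e2: "m + e < LL (WW kx)" using e lx by simp
      have i1: "i \<le> i + e" by simp
      have i2: "i + e < i + p" using e s kj0 p16 LL_le16[OF WW_lt4[of k0]] by linarith
      have h: "ww (i + e) = ww (i + e + p)" using sh[OF i1 i2] .
      have f1: "i + e = PP k0 + (j0 + e)" using kj0 by simp
      have h1: "ww (PP k0 + (j0+e)) = ET (WW k0) ! (j0+e)" using ww_blk[OF e1] by (simp add: blk_ET)
      have f2: "i + e + p = PP kx + (m + e)" using pkx' unfolding m_def by linarith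
      have h2: "ww (PP kx + (m+e)) = ET (WW kx) ! (m+e)" using ww_blk[OF e2] by (simp add: blk_ET)
      have "ET (WW kx) ! (m+e) = ET (WW k0) ! (j0+e)" using h f1 h1 f2 h2 by metis
      then show "drop m (ET (WW kx)) ! e = drop j0 (ET (WW k0)) ! e"
        using e1 e2 by (simp add: ET_len)
    qed
    have c1: "LL (WW kx) - m < LL (WW k0)" using lx s False by simp
    have c2: "m < LL (WW kx)" using lx s by simp
    have "tau (WW kx) = tau (WW (kx+q)) \<or> tau (WW kx) = tau (WW k0)"
      by (rule XYZ_fact[OF WW_lt4 WW_lt4 WW_lt4 m1 c2 tk my c1 dk])
    then show False
    proof
      assume "tau (WW kx) = tau (WW (kx+q))" then show False by (rule lastXY)
    next
      assume tz: "tau (WW kx) = tau (WW k0)"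
      have kxk0: "kx = k0 + q" using k1s q0 by (simp add: kx_def)
      have "\<forall>r<q. vtm (k0+r) = vtm (k0+q+r)"
      proof (intro allI impI)
        fix r assume r: "r < q"
        show "vtm (k0+r) = vtm (k0+q+r)"
        proof (cases r)
          case 0 then show ?thesis using tz kxk0 by (simp add: vtm_WW)
        next
          case (Suc r')
          then have "Suc r' < q" using r by simp
          then have "vtm (k1+r') = vtm (k1+q+r')" by (rule inner)
          then show ?thesis using Suc k1s by simp
        qed
      qed
      then show False using vtm_sqfree[OF q0, of k0] by blast
    qed
  qed
qed



lemma WW_1: "WW 1 = 1" using WW_rec1[of 0] by (simp add: g_def)
lemma WW_2: "WW 2 = 2" using WW_rec0[of 1] WW_1 by (simp add: g_def)
lemma WW_3: "WW 3 = 0" using WW_rec1[of 1] WW_1 by (simp add: g_def numeral_3_eq_3)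
lemma WW_4: "WW 4 = 2" using WW_rec0[of 2] WW_2 by (simp add: g_def)

lemma WW_small: "map WW [0..<0+5] = [0,1,2,0,2]"
proof -
  have u: "[0..<0+5] = [0::nat,1,2,3,4]" by code_simp
  show ?thesis by (simp only: u list.map WW_0 WW_1 WW_2 WW_3 WW_4)
qed

lemma F5_closed: "v \<in> set F5 \<Longrightarrow> c < 2 \<Longrightarrow> take 5 (drop c (concat (map g v))) \<in> set F5"
proof -
  assume v: "v \<in> set F5" and c: "c < 2"
  have "\<forall>v\<in>set F5. take 5 (concat (map g v)) \<in> set F5 \<and> take 5 (drop 1 (concat (map g v))) \<in> set F5"
    using chk_F5 by (simp only: list_all_iff)
  then have h: "take 5 (concat (map g v)) \<in> set F5" "take 5 (drop 1 (concat (map g v))) \<in> set F5"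
    using v by blast+
  have "c = 0 \<or> c = 1" using c by linarith
  then show ?thesis using h by (elim disjE) simp_all
qed

lemma WW_F5: "map WW [k..<k+5] \<in> set F5"
proof (induction k rule: less_induct)
  case (less k)
  show ?case
  proof (cases "k = 0")
    case True
    then show ?thesis using WW_small by (simp add: F5_def)
  next
    case False
    define m where "m = k div 2"
    define c where "c = k mod 2"
    have mk: "m < k" using False by (simp add: m_def)
    define v where "v = map WW [m..<m+5]"
    have v: "v \<in> set F5" using less mk by (simp add: v_def)
    have c2: "c < 2" by (simp add: c_def)
    have lv: "length (concat (map g v)) = 10" using concat_len2[of v] by (simp add: v_def)
    have "map WW [k..<k+5] = take 5 (drop c (concat (map g v)))"
    proof (rule nth_equalityI)
      show "length (map WW [k..<k+5]) = length (take 5 (drop c (concat (map g v))))" using lv c2 by simp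
    next
      fix e assume "e < length (map WW [k..<k+5])"
      then have e: "e < 5" by simp
      define d where "d = c + e"
      have dd: "d = 2 * (d div 2) + d mod 2" by simp
      have d5: "d div 2 < length v" using e c2 by (simp add: v_def d_def)
      have "take 5 (drop c (concat (map g v))) ! e = concat (map g v) ! d"
        using e lv c2 by (simp add: d_def)
      also have "\<dots> = g (v ! (d div 2)) ! (d mod 2)"
        using concat_nth2[OF d5, of "d mod 2"] dd by simp
      also have "\<dots> = g (WW (m + d div 2)) ! (d mod 2)" using d5 by (simp add: v_def)
      also have "\<dots> = WW (2 * (m + d div 2) + d mod 2)" using WW_rec[of "d mod 2" "m + d div 2"] by simp
      also have "2 * (m + d div 2) + d mod 2 = k + e"
      proof -
        have h1: "2*m + c = k" by (simp add: m_def c_def)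
        obtain X Y where XY: "X = d div 2" "Y = d mod 2" by blast
        have h2: "d = 2*X + Y" using dd XY by simp
        have "2 * (m + X) + Y = k + e" using h1 h2 unfolding d_def by presburger
        then show ?thesis using XY by simp
      qed
      finally show "map WW [k..<k+5] ! e = take 5 (drop c (concat (map g v))) ! e" using e by simp
    qed
    then show ?thesis using F5_closed[OF v c2] by simp
  qed
qed

lemma PP_add8: "PP (k + r) \<ge> PP k + 8 * r"
proof (induction r)
  case 0 then show ?case by simp
next
  case (Suc r)
  then show ?case using PP_Suc[of "k+r"] LL_WW_ge8[of "k+r"] by simp
qed

lemma small_fact: "v \<in> set F5 \<Longrightarrow> j < LL (hd v) \<Longrightarrow> 1 \<le> p \<Longrightarrow> p < 16 \<Longrightarrow>
   take p (take (2*p) (drop j (concat (map ET v)))) = drop p (take (2*p) (drop j (concat (map ET v))))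
   \<Longrightarrow> take (2*p) (drop j (concat (map ET v))) \<in> {[0,0],[1,1],[1,0,1,0]}"
proof -
  assume a: "v \<in> set F5" "j < LL (hd v)" "1 \<le> p" "p < 16"
    and t: "take p (take (2*p) (drop j (concat (map ET v)))) = drop p (take (2*p) (drop j (concat (map ET v))))"
  have h: "j \<in> set [0..<LL (hd v)]" "p \<in> set [1..<16]" using a by simp_all
  have "\<forall>v\<in>set F5. \<forall>j\<in>set [0..<LL (hd v)]. \<forall>p\<in>set [1..<16].
   take p (take (2*p) (drop j (concat (map ET v)))) = drop p (take (2*p) (drop j (concat (map ET v))))
   \<longrightarrow> take (2*p) (drop j (concat (map ET v))) \<in> {[0,0],[1,1],[1,0,1,0]}"
    using chk_small by (simp only: list_all_iff)
  then show ?thesis using a(1) h t by blast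
qed

lemma small_sq:
  assumes p: "1 \<le> p" "p < 16" and u: "u = map ww [i..<i+2*p]" and t: "take p u = drop p u"
  shows "u \<in> {[0,0],[1,1],[1,0,1,0]}"
proof -
  obtain k j where kj: "i = PP k + j" "j < LL (WW k)" using decomp by blast
  define v where "v = map WW [k..<k+5]"
  have v: "v \<in> set F5" using WW_F5 by (simp add: v_def)
  have hv: "hd v = WW k" by (simp add: v_def upt_rec)
  define S where "S = concat (map ET v)"
  have bf: "blk = (\<lambda>x. ET (WW x))" by (rule ext) (simp add: blk_ET)
  have S: "S = concat (map blk [k..<k+5])" by (simp add: S_def v_def bf map_map comp_def)
  have big: "PP (k+5) \<ge> PP k + LL (WW k) + 32"
    using PP_add8[of "Suc k" 4] PP_Suc[of k] by (simp add: add.commute)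
  have lS: "length S = PP (k+5) - PP k" using PP_diff_len[of k 5] S by simp
  have uS: "u = take (2*p) (drop j S)"
  proof (rule nth_equalityI)
    show "length u = length (take (2*p) (drop j S))" using u lS big kj p by simp
  next
    fix e assume "e < length u"
    then have e: "e < 2*p" using u by simp
    have je: "j + e < PP (k+5) - PP k" using e kj big p by linarith
    have "u ! e = ww (i + e)" using u e by simp
    also have "\<dots> = ww (PP k + (j+e))" using kj by (simp add: add.assoc)
    also have "\<dots> = S ! (j+e)" using ww_window[OF je] S by simp
    also have "\<dots> = take (2*p) (drop j S) ! e" using e je lS by simp
    finally show "u ! e = take (2*p) (drop j S) ! e" .
  qed
  show ?thesis using small_fact[OF v _ p] kj hv t uS by (simp add: S_def)
qed

lemma WW_1': "WW (Suc 0) = 1" using WW_1 by simp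

lemma ww_init: "e < 28 \<Longrightarrow> ww e = [0,0,1,1,0,0,0,1,1,1,0,0,1,1,0,1,0,0,1,1,1,0,0,0,1,1,0,1] ! e"
proof -
  assume e: "e < 28"
  have "ww (PP 0 + e) = (ET (WW 0) @ ET (WW (Suc 0))) ! e" by (rule win2) (use e in \<open>simp add: WW_1'\<close>)
  moreover have "ET (WW 0) @ ET (WW (Suc 0)) = [0,0,1,1,0,0,0,1,1,1,0,0,1,1,0,1,0,0,1,1,1,0,0,0,1,1,0,1]" by (simp add: WW_1' ET_def eta_def tau_def)
  ultimately show ?thesis by simp
qed

lemma sq_subset: "is_factor u ww \<Longrightarrow> is_square u \<Longrightarrow> u \<in> {[0,0],[1,1],[1,0,1,0]}"
proof -
  assume f: "is_factor u ww" and s: "is_square u"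
  obtain x where x: "x \<noteq> []" "u = x @ x" using s by (auto simp: is_square_def)
  obtain i where i: "u = map ww [i..<i + length u]" using f by (auto simp: is_factor_def)
  define p where "p = length x"
  have p1: "1 \<le> p" using x by (simp add: p_def Suc_le_eq)
  have lu: "length u = 2*p" using x by (simp add: p_def)
  from i have u2: "u = map ww [i..<i+2*p]" by (simp only: lu)
  have t: "take p u = drop p u" using x by (simp add: p_def)
  show ?thesis
  proof (cases "p < 16")
    case True
    show ?thesis by (rule small_sq[OF p1 True u2 t])
  next
    case False
    have "\<forall>e<p. ww (i+e) = ww (i+p+e)"
    proof (intro allI impI)
      fix e assume e: "e < p"
      have a1: "u ! e = x ! e" using x e by (simp add: p_def nth_append)
      have a2: "u ! (p+e) = x ! e" using x e by (simp add: p_def nth_append)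
      have a3: "u ! e = ww (i+e)" using e by (subst u2) simp
      have a4: "u ! (p+e) = ww (i+(p+e))" using e by (subst u2) simp
      show "ww (i+e) = ww (i+p+e)" using a1 a2 a3 a4 by (simp add: add.assoc)
    qed
    then show ?thesis using big_square[of p i] False by simp
  qed
qed

theorem theorem5:
  shows "{u. is_factor u (morph_inf eta vtm) \<and> is_square u} = {[0,0], [1,1], [1,0,1,0]}
         \<and> two_automatic_with 27 (morph_inf eta vtm)"
proof
  show "two_automatic_with 27 (morph_inf eta vtm)" by (rule automatic)
next
  have w0: "ww 0 = 0" by (subst ww_init) simp_all
  have w1: "ww 1 = 0" by (subst ww_init) simp_all
  have w2: "ww 2 = 1" by (subst ww_init) simp_all
  have w3: "ww 3 = 1" by (subst ww_init) simp_all
  have w13: "ww 13 = 1" by (subst ww_init) simp_all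
  have w14: "ww 14 = 0" by (subst ww_init) simp_all
  have w15: "ww 15 = 1" by (subst ww_init) simp_all
  have w16: "ww 16 = 0" by (subst ww_init) simp_all
  have w1': "ww (Suc 0) = 0" using w1 by simp
  note w = w0 w1 w1' w2 w3 w13 w14 w15 w16
  have f1: "is_factor [0,0] ww" unfolding is_factor_def
    by (rule exI[of _ 0]) (simp add: upt_rec w)
  have f2: "is_factor [1,1] ww" unfolding is_factor_def
    by (rule exI[of _ 2]) (simp add: upt_rec w)
  have f3: "is_factor [1,0,1,0] ww" unfolding is_factor_def
    by (rule exI[of _ 13]) (simp add: upt_rec w)
  have s1: "is_square [0,0]" unfolding is_square_def by (rule exI[of _ "[0]"]) simp
  have s2: "is_square [1,1]" unfolding is_square_def by (rule exI[of _ "[1]"]) simp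
  have s3: "is_square [1,0,1,0]" unfolding is_square_def by (rule exI[of _ "[1,0]"]) simp
  note s = s1 s2 s3
  show "{u. is_factor u (morph_inf eta vtm) \<and> is_square u} = {[0,0], [1,1], [1,0,1,0]}"
    using sq_subset f1 f2 f3 s by blast
qed


end
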